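(* Let $p,q$ be nonnegative integers, $a_1,\dots,a_p,b_1,\dots,b_q,d,e,f$ complex parameters and $x,y$ complex variables such that all series involved converge and all terms are defined. Then $$\sum_{n\ge0}\frac{(a_1)_n\cdots(a_p)_n(d)_n\,x^ny^n}{(b_1)_n\cdots(b_q)_n\,n!}\,{}_2F_2\!\left[\begin{matrix}d+n,\ e+2\\ f+1,\ e\end{matrix};x\right]=\sum_{n\ge0}\frac{(d)_n(e+2)_n\,x^n}{(f+1)_n(e)_n\,n!}\,{}_{p+3}F_{q+1}\!\left[\begin{matrix}-n,\ 1-e-n,\ -f-n,\ a_1,\dots,a_p\\ -1-e-n,\ b_1,\dots,b_q\end{matrix};y\right].$$
   Context: $(a)_k=a(a+1)\cdots(a+k-1)$ (with $(a)_0=1$) is the Pochhammer symbol. The generalized hypergeometric series is ${}_pF_q\!\left[\begin{matrix}a_1,\dots,a_p\\ b_1,\dots,b_q\end{matrix};z\right]=\sum_{k\ge0}\frac{(a_1)_k\cdots(a_p)_k}{(b_1)_k\cdots(b_q)_k}\frac{z^k}{k!}$; with a numerator parameter $-n$ ($n$ a nonnegative integer) it terminates after the $k=n$ term. *)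

theory Defs
  imports "HOL-Analysis.Analysis"
begin

definition hyp_term :: "complex list \<Rightarrow> complex list \<Rightarrow> complex \<Rightarrow> nat \<Rightarrow> complex" where
  "hyp_term as bs z k =
     (\<Prod>a\<leftarrow>as. pochhammer a k) / (\<Prod>b\<leftarrow>bs. pochhammer b k) * z ^ k / fact k"

definition hypF :: "complex list \<Rightarrow> complex list \<Rightarrow> complex \<Rightarrow> complex" where
  "hypF as bs z = (\<Sum>k. hyp_term as bs z k)"

end

theory Submission
  imports Defs
begin

lemma double_suminf:
  fixes c :: "nat \<Rightarrow> complex" and g :: "nat \<Rightarrow> nat \<Rightarrow> complex"
  assumes S: "(\<lambda>(n,k). c n * g n k) summable_on UNIV"
  shows "(\<Sum>n. c n * (\<Sum>k. g n k)) = (\<Sum>\<^sub>\<infinity>(n,k). c n * g n k)"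
proof -
  let ?f = "\<lambda>(n,k). c n * g n k"
  have S': "?f summable_on Sigma UNIV (\<lambda>_. UNIV)" using S by simp
  have row: "(\<lambda>k. c n * g n k) summable_on UNIV" for n
    using summable_on_SigmaD1[of "\<lambda>n k. c n * g n k", OF S'] by simp
  have rowsum: "c n * (\<Sum>k. g n k) = (\<Sum>\<^sub>\<infinity>k. c n * g n k)" for n
  proof (cases "c n = 0")
    case True then show ?thesis by simp
  next
    case False
    have s1: "(\<lambda>k. c n * g n k) sums (\<Sum>\<^sub>\<infinity>k. c n * g n k)"
      using has_sum_imp_sums[OF has_sum_infsum[OF row]] .
    hence "summable (\<lambda>k. c n * g n k)" by (rule sums_summable)
    hence "summable (g n)" using False summable_cmult_iff by blast
    hence s2: "(\<lambda>k. c n * g n k) sums (c n * (\<Sum>k. g n k))"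
      by (intro sums_mult summable_sums)
    show ?thesis using sums_unique2[OF s2 s1] .
  qed
  have outer: "(\<lambda>n. \<Sum>\<^sub>\<infinity>k. c n * g n k) summable_on UNIV"
    using summable_on_SigmaD[OF S', of] row by simp
  have "(\<lambda>n. \<Sum>\<^sub>\<infinity>k. c n * g n k) sums (\<Sum>\<^sub>\<infinity>n. \<Sum>\<^sub>\<infinity>k. c n * g n k)"
    using has_sum_imp_sums[OF has_sum_infsum[OF outer]] .
  hence "(\<Sum>n. c n * (\<Sum>k. g n k)) = (\<Sum>\<^sub>\<infinity>n. \<Sum>\<^sub>\<infinity>k. c n * g n k)"
    using rowsum sums_unique by (metis (no_types, lifting) sums_cong)
  also have "\<dots> = infsum ?f (Sigma UNIV (\<lambda>_. UNIV))"
    using infsum_Sigma_banach[OF S'] by simp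
  finally show ?thesis by simp
qed

lemma pm: "pochhammer (c - of_nat (n+k)) n = (-1)^n * pochhammer (of_nat k + 1 - c :: complex) n"
proof -
  have "pochhammer (c - of_nat (n+k)) n = pochhammer (- (of_nat (n+k) - c)) n" by simp
  also have "\<dots> = (-1)^n * pochhammer (of_nat (n+k) - c - of_nat n + 1) n" by (rule pochhammer_minus)
  also have "of_nat (n+k) - c - of_nat n + 1 = of_nat k + 1 - c" by simp
  finally show ?thesis .
qed

lemma term_id:
  fixes as bs :: "complex list" and d e f x y :: complex
  assumes bs_def: "\<forall>b\<in>set bs. \<forall>n. pochhammer b n \<noteq> 0"
    and f_def: "\<forall>n. pochhammer (f + 1) n \<noteq> 0"
    and e_def: "\<forall>n. pochhammer e n \<noteq> 0"
    and e_def2: "\<forall>m j. j \<le> m \<longrightarrow> pochhammer (-1 - e - of_nat m) j \<noteq> 0"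
  shows "(\<Prod>a\<leftarrow>as. pochhammer a n) * pochhammer d n * x ^ n * y ^ n
                       / ((\<Prod>b\<leftarrow>bs. pochhammer b n) * fact n)
                     * hyp_term [d + of_nat n, e + 2] [f + 1, e] x k
   = pochhammer d (n+k) * pochhammer (e + 2) (n+k) * x ^ (n+k)
                       / (pochhammer (f + 1) (n+k) * pochhammer e (n+k) * fact (n+k))
                     * hyp_term ([- of_nat (n+k), 1 - e - of_nat (n+k), - f - of_nat (n+k)] @ as)
                                ([-1 - e - of_nat (n+k)] @ bs) y n"
proof -
  have p1: "pochhammer (- of_nat (n+k)) n = (-1)^n * pochhammer (of_nat k + 1 :: complex) n"
    using pm[of 0 n k] by simp
  have p2: "pochhammer (1 - e - of_nat(n+k)) n = (-1)^n * pochhammer (e + of_nat k) n"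
    using pm[of "1 - e" n k] by (simp add: algebra_simps)
  have p3: "pochhammer (- f - of_nat(n+k)) n = (-1)^n * pochhammer (f + 1 + of_nat k) n"
    using pm[of "- f" n k] by (simp add: algebra_simps)
  have p4: "pochhammer (-1 - e - of_nat(n+k)) n = (-1)^n * pochhammer (e + 2 + of_nat k) n"
    using pm[of "-1 - e" n k] by (simp add: algebra_simps)
  have q1: "pochhammer d (n+k) = pochhammer d n * pochhammer (d + of_nat n) k"
    by (rule pochhammer_product')
  have q2: "pochhammer (e+2) (n+k) = pochhammer (e+2) k * pochhammer (e + 2 + of_nat k) n"
    using pochhammer_product'[of "e+2" k n] by (simp add: add.commute)
  have q3: "pochhammer e (n+k) = pochhammer e k * pochhammer (e + of_nat k) n"
    using pochhammer_product'[of "e" k n] by (simp add: add.commute)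
  have q4: "pochhammer (f+1) (n+k) = pochhammer (f+1) k * pochhammer (f + 1 + of_nat k) n"
    using pochhammer_product'[of "f+1" k n] by (simp add: add.commute)
  have q5: "(fact (n+k) :: complex) = fact k * pochhammer (of_nat k + 1) n"
    using pochhammer_product'[of "1::complex" k n] by (simp add: pochhammer_fact add.commute)
  have nz1: "pochhammer (e + 2 + of_nat k) n \<noteq> 0"
    using e_def2 p4 by (metis le_add1 mult_zero_right)
  have nz2: "pochhammer e k \<noteq> 0" "pochhammer (e + of_nat k) n \<noteq> 0"
    using e_def q3 by (metis mult_zero_left mult_zero_right)+
  have nz3: "pochhammer (f+1) k \<noteq> 0" "pochhammer (f + 1 + of_nat k) n \<noteq> 0"
    using f_def q4 by (metis mult_zero_left mult_zero_right)+
  have nz4: "pochhammer (of_nat k + 1 :: complex) n \<noteq> 0"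
    using q5 by (metis fact_nonzero mult_zero_right)
  have nz5: "(\<Prod>b\<leftarrow>bs. pochhammer b n) \<noteq> 0"
    using bs_def by (auto simp add: prod_list_zero_iff)
  have nz6: "(fact n :: complex) \<noteq> 0" "(fact k :: complex) \<noteq> 0" by simp_all
  have h1: "hyp_term [d + of_nat n, e + 2] [f + 1, e] x k = pochhammer (d + of_nat n) k * pochhammer (e + 2) k / (pochhammer (f+1) k * pochhammer e k) * x^k / fact k"
    by (simp add: hyp_term_def)
  have h2: "hyp_term ([- of_nat (n+k), 1 - e - of_nat (n+k), - f - of_nat (n+k)] @ as)
                                ([-1 - e - of_nat (n+k)] @ bs) y n
     = pochhammer (- of_nat (n+k)) n * pochhammer (1 - e - of_nat(n+k)) n * pochhammer (- f - of_nat(n+k)) n * (\<Prod>a\<leftarrow>as. pochhammer a n)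
       / (pochhammer (-1 - e - of_nat(n+k)) n * (\<Prod>b\<leftarrow>bs. pochhammer b n)) * y^n / fact n"
    unfolding hyp_term_def by (simp only: append_Cons append_Nil list.map prod_list.Cons mult.assoc)
  show ?thesis
    unfolding h1 h2 p1 p2 p3 p4 q1 q2 q3 q4 q5 power_add
    using nz1 nz2 nz3 nz4 nz5 nz6
    by (simp add: field_simps)
qed


theorem mainTheorem8:
  fixes as bs :: "complex list" and d e f x y :: complex
  assumes bs_def: "\<forall>b\<in>set bs. \<forall>n. pochhammer b n \<noteq> 0"
    and f_def: "\<forall>n. pochhammer (f + 1) n \<noteq> 0"
    and e_def: "\<forall>n. pochhammer e n \<noteq> 0"
    and e_def2: "\<forall>m j. j \<le> m \<longrightarrow> pochhammer (-1 - e - of_nat m) j \<noteq> 0"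
    and conv_lhs: "(\<lambda>(n, k). (\<Prod>a\<leftarrow>as. pochhammer a n) * pochhammer d n * x ^ n * y ^ n
                       / ((\<Prod>b\<leftarrow>bs. pochhammer b n) * fact n)
                     * hyp_term [d + of_nat n, e + 2] [f + 1, e] x k) summable_on UNIV"
    and conv_rhs: "(\<lambda>(m, j). pochhammer d m * pochhammer (e + 2) m * x ^ m
                       / (pochhammer (f + 1) m * pochhammer e m * fact m)
                     * hyp_term ([- of_nat m, 1 - e - of_nat m, - f - of_nat m] @ as)
                                ([-1 - e - of_nat m] @ bs) y j) summable_on UNIV"
  shows "(\<Sum>n. (\<Prod>a\<leftarrow>as. pochhammer a n) * pochhammer d n * x ^ n * y ^ n
                 / ((\<Prod>b\<leftarrow>bs. pochhammer b n) * fact n)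
               * hypF [d + of_nat n, e + 2] [f + 1, e] x)
       = (\<Sum>n. pochhammer d n * pochhammer (e + 2) n * x ^ n
                 / (pochhammer (f + 1) n * pochhammer e n * fact n)
               * hypF ([- of_nat n, 1 - e - of_nat n, - f - of_nat n] @ as)
                      ([-1 - e - of_nat n] @ bs) y)"
  proof -
  let ?L = "\<lambda>n k. (\<Prod>a\<leftarrow>as. pochhammer a n) * pochhammer d n * x ^ n * y ^ n
                       / ((\<Prod>b\<leftarrow>bs. pochhammer b n) * fact n)
                     * hyp_term [d + of_nat n, e + 2] [f + 1, e] x k"
  let ?R = "\<lambda>m j. pochhammer d m * pochhammer (e + 2) m * x ^ m
                       / (pochhammer (f + 1) m * pochhammer e m * fact m)
                     * hyp_term ([- of_nat m, 1 - e - of_nat m, - f - of_nat m] @ as)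
                                ([-1 - e - of_nat m] @ bs) y j"
  have L: "(\<Sum>n. (\<Prod>a\<leftarrow>as. pochhammer a n) * pochhammer d n * x ^ n * y ^ n
                 / ((\<Prod>b\<leftarrow>bs. pochhammer b n) * fact n)
               * hypF [d + of_nat n, e + 2] [f + 1, e] x) = (\<Sum>\<^sub>\<infinity>(n,k). ?L n k)"
    unfolding hypF_def by (rule double_suminf[OF conv_lhs])
  have R: "(\<Sum>n. pochhammer d n * pochhammer (e + 2) n * x ^ n
                 / (pochhammer (f + 1) n * pochhammer e n * fact n)
               * hypF ([- of_nat n, 1 - e - of_nat n, - f - of_nat n] @ as)
                      ([-1 - e - of_nat n] @ bs) y) = (\<Sum>\<^sub>\<infinity>(m,j). ?R m j)"
    unfolding hypF_def by (rule double_suminf[OF conv_rhs])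
  have zero: "?R m j = 0" if "j > m" for m j
  proof -
    have "pochhammer (- of_nat m :: complex) j = 0"
      using that by (rule pochhammer_of_nat_eq_0_lemma)
    thus ?thesis by (simp add: hyp_term_def)
  qed
  have "(\<Sum>\<^sub>\<infinity>(m,j). ?R m j) = (\<Sum>\<^sub>\<infinity>(m,j)\<in>{(m,j). j \<le> m}. ?R m j)"
  proof (rule infsum_cong_neutral)
    fix p :: "nat \<times> nat" assume "p \<in> UNIV - {(m,j). j \<le> m}"
    moreover obtain m j where "p = (m,j)" by (cases p)
    ultimately have "p = (m,j)" "j > m" by (auto simp: not_le)
    then show "(\<lambda>(m,j). ?R m j) p = 0" using zero by simp
  qed auto
  also have "\<dots> = (\<Sum>\<^sub>\<infinity>p\<in>UNIV. (\<lambda>(m,j). ?R m j) ((\<lambda>(n,k). (n+k, n)) p))"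
  proof (rule infsum_reindex_bij_betw[symmetric])
    show "bij_betw (\<lambda>(n,k). (n+k, n)) UNIV {(m,j). j \<le> (m::nat)}"
      by (rule bij_betw_byWitness[where f' = "\<lambda>(m,j). (j, m - j)"]) auto
  qed
  also have "\<dots> = (\<Sum>\<^sub>\<infinity>(n,k). ?L n k)"
  proof (rule infsum_cong)
    fix p :: "nat \<times> nat"
    obtain n k where p: "p = (n,k)" by (cases p)
    show "(\<lambda>(m,j). ?R m j) ((\<lambda>(n,k). (n+k, n)) p) = (\<lambda>(n,k). ?L n k) p"
      unfolding p case_prod_conv by (rule term_id[OF bs_def f_def e_def e_def2, symmetric])
  qed
  finally show ?thesis using L R by simp
qed

end
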